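(* Let $\mathcal{G}$ be a compact group acting linearly and orthogonally on $\mathbb{R}^d$ (so $\|g\cdot x\|=\|x\|$), with normalized Haar probability measure $\lambda$. Let $(\widetilde Z_0,\widetilde Z_1)$ be a pair of $\mathbb{R}^d$-valued random vectors with finite second moments, and let $G\sim\lambda$ be independent of $(\widetilde Z_0,\widetilde Z_1)$. Define $(Z_0,Z_1)=(G\cdot\widetilde Z_0,\,G\cdot\widetilde Z_1)$, and for a fixed $t\in[0,1]$ let $Z_t=(1-t)Z_0+tZ_1$ and $\widetilde Z_t=(1-t)\widetilde Z_0+t\widetilde Z_1$. Let $\Delta:=\widetilde Z_1-\widetilde Z_0$ and $U:=Z_1-Z_0=G\cdot\Delta$. Then $$\mathrm{Var}(U\mid Z_t)=\mathbb{E}\big[\mathrm{Var}(\Delta\mid\widetilde Z_t)\,\big|\,Z_t\big]+\mathrm{Var}\big(\mathbb{E}[U\mid Z_t,G]\,\big|\,Z_t\big),$$ where the second term is nonnegative. Consequently $$\mathbb{E}\big[\mathrm{Var}(U\mid Z_t)\big]\ \ge\ \mathbb{E}\big[\mathrm{Var}(\Delta\mid\widetilde Z_t)\big].$$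
   Context: For random vectors $X,Y$, $\mathrm{Var}(X\mid Y):=\mathbb{E}\big[\|X-\mathbb{E}[X\mid Y]\|^2\mid Y\big]$ (trace of the conditional covariance). *)

theory Defs
  imports "HOL-Probability.Probability" "HOL-Algebra.Group"
begin

definition sigma_of :: "'a measure \<Rightarrow> 'b measure \<Rightarrow> ('a \<Rightarrow> 'b) \<Rightarrow> 'a measure" where
  "sigma_of M N Y = vimage_algebra (space M) Y N"

definition cond_exp_vec :: "'a measure \<Rightarrow> 'a measure \<Rightarrow> ('a \<Rightarrow> real^'d) \<Rightarrow> 'a \<Rightarrow> real^'d" where
  "cond_exp_vec M F X = (\<lambda>\<omega>. \<chi> i. real_cond_exp M F (\<lambda>\<eta>. X \<eta> $ i) \<omega>)"

text \<open>Conditional variance (trace of conditional covariance):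
  Var(X | F) = E[ norm (X - E[X|F])^2 | F ].\<close>
definition cond_var :: "'a measure \<Rightarrow> 'a measure \<Rightarrow> ('a \<Rightarrow> real^'d) \<Rightarrow> 'a \<Rightarrow> real" where
  "cond_var M F X = real_cond_exp M F (\<lambda>\<omega>. (norm (X \<omega> - cond_exp_vec M F X \<omega>))^2)"

end

theory Submission
  imports Defs
begin

lemma vec_meas:
  fixes f :: "'a \<Rightarrow> real^'n"
  assumes "\<And>i. (\<lambda>x. f x $ i) \<in> borel_measurable M"
  shows "f \<in> borel_measurable M"
proof -
  have "f = (\<lambda>x. \<Sum>i\<in>UNIV. (f x $ i) *\<^sub>R axis i 1)"
    by (rule ext) (simp add: scalar_mult_eq_scaleR[symmetric] basis_expansion)
  also have "\<dots> \<in> borel_measurable M" using assms by measurable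
  finally show ?thesis .
qed

lemma normsq_vec: "(norm (x::real^'n))^2 = (\<Sum>i\<in>UNIV. (x$i)^2)"
  by (simp add: norm_vec_def L2_set_def sum_nonneg)

lemma vimage_sub:
  assumes "f \<in> measurable F N"
  shows "subalgebra F (vimage_algebra (space F) f N)"
  unfolding subalgebra_def using assms
  by (auto simp: sets_vimage_algebra2 measurable_space measurable_sets)

lemma (in prob_space) sfs: "subalgebra M F \<Longrightarrow> sigma_finite_subalgebra M F"
  by (intro finite_measure_subalgebra_is_sigma_finite)
     (simp add: finite_measure_subalgebra_def finite_measure_subalgebra_axioms_def finite_measure_axioms)

lemma vimage_sets_sub:
  assumes "f \<in> X \<rightarrow> space N" "g \<in> X \<rightarrow> space N'" "\<And>x. x \<in> X \<Longrightarrow> f x = \<phi> (g x)"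
    "\<phi> \<in> measurable N' N"
  shows "sets (vimage_algebra X f N) \<subseteq> sets (vimage_algebra X g N')"
proof
  fix E assume "E \<in> sets (vimage_algebra X f N)"
  then obtain A where A: "A \<in> sets N" "E = f -` A \<inter> X" using assms(1) by (auto simp: sets_vimage_algebra2)
  have "E = g -` (\<phi> -` A \<inter> space N') \<inter> X" using A assms(2,3) by auto
  moreover have "\<phi> -` A \<inter> space N' \<in> sets N'" by (rule measurable_sets[OF assms(4) A(1)])
  ultimately show "E \<in> sets (vimage_algebra X g N')" using assms(2) unfolding sets_vimage_algebra2[OF assms(2)] by blast
qed

lemma vimage_eq:
  assumes "sets (vimage_algebra X f N) = sets (vimage_algebra X g N')"
  shows "vimage_algebra X f N = vimage_algebra X g N'"
  by (rule measure_eqI[OF assms]) (simp add: vimage_algebra_def emeasure_sigma)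


lemma (in prob_space) indep_comp:
  assumes ind: "indep_var A id B id"
    and f: "f \<in> borel_measurable A" and g: "g \<in> borel_measurable B"
  shows "indep_var borel f borel (g::'a \<Rightarrow> real)"
  using indep_var_compose[OF ind f g] by (simp add: o_def)

lemma (in prob_space) core:
  fixes Z :: "'a \<Rightarrow> 'b::topological_space" and G :: "'a \<Rightarrow> 'g" and X Y :: "'a \<Rightarrow> real"
  assumes subA: "subalgebra M A"
    and Gm: "G \<in> measurable M L"
    and ind: "indep_var A id (vimage_algebra (space M) G L) id"
    and Zm: "Z \<in> measurable A borel"
    and Xm: "X \<in> borel_measurable A" and Xi: "integrable M X"
    and Ym: "Y \<in> borel_measurable (vimage_algebra (space M) G L)" and Yb: "\<And>x. \<bar>Y x\<bar> \<le> c"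
  shows "AE x in M. real_cond_exp M (vimage_algebra (space M) (\<lambda>\<omega>. (Z \<omega>, G \<omega>)) (borel \<Otimes>\<^sub>M L)) (\<lambda>\<omega>. X \<omega> * Y \<omega>) x
           = real_cond_exp M (vimage_algebra (space M) Z borel) X x * Y x"
proof -
  define B where "B = vimage_algebra (space M) G L"
  define K where "K = vimage_algebra (space M) Z borel"
  define H where "H = vimage_algebra (space M) (\<lambda>\<omega>. (Z \<omega>, G \<omega>)) (borel \<Otimes>\<^sub>M L)"
  have spA: "space A = space M" using subA by (simp add: subalgebra_def)
  have ZM: "Z \<in> measurable M borel" by (rule measurable_from_subalg[OF subA Zm])
  have ZGm: "(\<lambda>\<omega>. (Z \<omega>, G \<omega>)) \<in> measurable M (borel \<Otimes>\<^sub>M L)" using ZM Gm by measurable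
  have subB: "subalgebra M B" unfolding B_def by (rule vimage_sub[OF Gm])
  have subK: "subalgebra M K" unfolding K_def by (rule vimage_sub[OF ZM])
  have subH: "subalgebra M H" unfolding H_def by (rule vimage_sub[OF ZGm])
  have pH: "(\<lambda>\<omega>. (Z \<omega>, G \<omega>)) \<in> measurable H (borel \<Otimes>\<^sub>M L)"
    unfolding H_def by (rule measurable_vimage_algebra1) (use ZGm in \<open>auto dest: measurable_space\<close>)
  have ZH: "Z \<in> measurable H borel" using measurable_compose[OF pH measurable_fst] by simp
  have GH: "G \<in> measurable H L" using measurable_compose[OF pH measurable_snd] by simp
  have subHK: "subalgebra H K" using vimage_sub[OF ZH] by (simp add: K_def H_def)
  have subHB: "subalgebra H B" using vimage_sub[OF GH] by (simp add: B_def H_def)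
  have subAK: "subalgebra A K" using vimage_sub[OF Zm] by (simp add: K_def spA)
  have YH: "Y \<in> borel_measurable H" using measurable_from_subalg[OF subHB] Ym by (simp add: B_def)
  have YM: "Y \<in> borel_measurable M" using measurable_from_subalg[OF subB] Ym by (simp add: B_def)
  have XM: "X \<in> borel_measurable M" by (rule measurable_from_subalg[OF subA Xm])
  have Yint: "integrable M Y" by (rule integrable_const_bound[where B=c]) (use Yb YM in auto)
  interpret K: sigma_finite_subalgebra M K by (rule sfs[OF subK])
  interpret H: sigma_finite_subalgebra M H by (rule sfs[OF subH])
  define E where "E = real_cond_exp M K X"
  have EK: "E \<in> borel_measurable K" unfolding E_def by simp
  have EA: "E \<in> borel_measurable A" by (rule measurable_from_subalg[OF subAK EK])
  have EH: "E \<in> borel_measurable H" by (rule measurable_from_subalg[OF subHK EK])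
  have Eint: "integrable M E" unfolding E_def by (rule K.real_cond_exp_int(1)[OF Xi])
  have indB: "indep_var A id B id" using ind by (simp add: B_def)
  have XYint: "integrable M (\<lambda>x. X x * Y x)"
    by (rule indep_var_integrable[OF indep_comp[OF indB Xm] Xi Yint]) (use Ym in \<open>simp add: B_def\<close>)
  have EYint: "integrable M (\<lambda>x. E x * Y x)"
    by (rule indep_var_integrable[OF indep_comp[OF indB EA] Eint Yint]) (use Ym in \<open>simp add: B_def\<close>)
  define Q where "Q S = (\<lambda>\<omega>. (Z \<omega>, G \<omega>)) -` S \<inter> space M" for S
  define P where "P S \<longleftrightarrow> (\<integral>x\<in>Q S. X x * Y x \<partial>M) = (\<integral>x\<in>Q S. E x * Y x \<partial>M)" for S
  have QM: "Q S \<in> sets M" if "S \<in> sets (borel \<Otimes>\<^sub>M L)" for S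
    unfolding Q_def by (rule measurable_sets[OF ZGm that])
  have basicP: "P (a \<times> b)" if a: "a \<in> sets borel" and b: "b \<in> sets L" for a b
  proof -
    define A1 where "A1 = Z -` a \<inter> space M"
    define B1 where "B1 = G -` b \<inter> space M"
    have A1K: "A1 \<in> sets K" unfolding A1_def K_def using a ZM
      by (subst sets_vimage_algebra2) (auto dest: measurable_space)
    have A1A: "A1 \<in> sets A" using A1K subAK by (auto simp: subalgebra_def)
    have A1M: "A1 \<in> sets M" using A1K subK by (auto simp: subalgebra_def)
    have B1B: "B1 \<in> sets B" unfolding B1_def B_def using b Gm
      by (subst sets_vimage_algebra2) (auto dest: measurable_space)
    have B1M: "B1 \<in> sets M" using B1B subB by (auto simp: subalgebra_def)
    have QA: "Q (a \<times> b) = A1 \<inter> B1" by (auto simp: Q_def A1_def B1_def)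
    have f1: "(\<lambda>x. indicator A1 x * X x) \<in> borel_measurable A" using A1A Xm by measurable
    have f2: "(\<lambda>x. indicator A1 x * E x) \<in> borel_measurable A" using A1A EA by measurable
    have g: "(\<lambda>x. indicator B1 x * Y x) \<in> borel_measurable B" using B1B Ym by (simp add: B_def) measurable
    have i1: "integrable M (\<lambda>x. indicator A1 x * X x)"
      using integrable_real_mult_indicator[OF A1M Xi] by (simp add: mult.commute)
    have i2: "integrable M (\<lambda>x. indicator A1 x * E x)"
      using integrable_real_mult_indicator[OF A1M Eint] by (simp add: mult.commute)
    have i3: "integrable M (\<lambda>x. indicator B1 x * Y x)"
      using integrable_real_mult_indicator[OF B1M Yint] by (simp add: mult.commute)
    have eqK: "(\<integral>x. indicator A1 x * E x \<partial>M) = (\<integral>x. indicator A1 x * X x \<partial>M)"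
      unfolding E_def by (rule K.real_cond_exp_intg(2)) (use i1 A1K XM in auto)
    have "(\<integral>x\<in>Q (a \<times> b). X x * Y x \<partial>M) = (\<integral>x. (indicator A1 x * X x) * (indicator B1 x * Y x) \<partial>M)"
      unfolding set_lebesgue_integral_def QA by (intro Bochner_Integration.integral_cong refl) (auto simp: indicator_inter_arith)
    also have "\<dots> = (\<integral>x. indicator A1 x * X x \<partial>M) * (\<integral>x. indicator B1 x * Y x \<partial>M)"
      by (rule indep_var_lebesgue_integral[OF indep_comp[OF indB f1 g] i1 i3])
    also have "\<dots> = (\<integral>x. indicator A1 x * E x \<partial>M) * (\<integral>x. indicator B1 x * Y x \<partial>M)"
      by (simp add: eqK)
    also have "\<dots> = (\<integral>x. (indicator A1 x * E x) * (indicator B1 x * Y x) \<partial>M)"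
      by (rule indep_var_lebesgue_integral[OF indep_comp[OF indB f2 g] i2 i3, symmetric])
    also have "\<dots> = (\<integral>x\<in>Q (a \<times> b). E x * Y x \<partial>M)"
      unfolding set_lebesgue_integral_def QA by (intro Bochner_Integration.integral_cong refl) (auto simp: indicator_inter_arith)
    finally show ?thesis unfolding P_def .
  qed
  have all: "P S" if S: "S \<in> sets (borel \<Otimes>\<^sub>M L)" for S
  proof -
    have S': "S \<in> sigma_sets (UNIV \<times> space L) {a \<times> b | a b. a \<in> sets borel \<and> b \<in> sets L}"
      using S by (simp add: sets_pair_measure)
    have cl: "{a \<times> b | a b. a \<in> sets borel \<and> b \<in> sets L} \<subseteq> Pow (UNIV \<times> space L)"
      using sets.sets_into_space by fastforce
    from Int_stable_pair_measure_generator[of borel L] cl S' show ?thesis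
    proof (induction rule: sigma_sets_induct_disjoint)
      case (basic S) then show ?case using basicP by auto
    next
      case empty show ?case by (simp add: P_def Q_def set_lebesgue_integral_def)
    next
      case (compl S)
      have SM: "S \<in> sets (borel \<Otimes>\<^sub>M L)" using compl(1) by (simp add: sets_pair_measure)
      have Qc: "Q (UNIV \<times> space L - S) = space M - Q S"
        using Gm by (auto simp: Q_def dest: measurable_space)
      have tot: "P (UNIV \<times> space L)" by (rule basicP) auto
      have QU: "Q (UNIV \<times> space L) = space M" using Gm by (auto simp: Q_def dest: measurable_space)
      have d: "(\<integral>x\<in>space M - Q S. f x \<partial>M) = (\<integral>x. f x \<partial>M) - (\<integral>x\<in>Q S. f x \<partial>M)"
        if fi: "integrable M f" for f :: "'a \<Rightarrow> real"
      proof -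
        have "(\<integral>x\<in>space M - Q S. f x \<partial>M) = (\<integral>x. f x - indicator (Q S) x * f x \<partial>M)"
          unfolding set_lebesgue_integral_def by (intro Bochner_Integration.integral_cong refl) (auto split: split_indicator)
        also have "\<dots> = (\<integral>x. f x \<partial>M) - (\<integral>x. indicator (Q S) x * f x \<partial>M)"
          by (rule Bochner_Integration.integral_diff[OF fi])
             (use integrable_real_mult_indicator[OF QM[OF SM] fi] in \<open>simp add: mult.commute\<close>)
        finally show ?thesis by (simp add: set_lebesgue_integral_def)
      qed
      have "(\<integral>x. X x * Y x \<partial>M) = (\<integral>x. E x * Y x \<partial>M)"
        using tot unfolding P_def QU
        by (simp add: set_integral_space[OF XYint] set_integral_space[OF EYint])
      then show ?case using compl(2) unfolding P_def Qc d[OF XYint] d[OF EYint] by simp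
    next
      case (union S)
      have SM: "S i \<in> sets (borel \<Otimes>\<^sub>M L)" for i using union(2) by (auto simp: sets_pair_measure)
      have QU: "Q (\<Union>i. S i) = (\<Union>i. Q (S i))" by (auto simp: Q_def)
      have disj: "Q (S i) \<inter> Q (S j) = {}" if "i \<noteq> j" for i j
        using union(1) that by (auto simp: Q_def disjoint_family_on_def)
      have ca: "(\<integral>x\<in>(\<Union>i. Q (S i)). f x \<partial>M) = (\<Sum>i. (\<integral>x\<in>Q (S i). f x \<partial>M))"
        if fi: "integrable M f" for f :: "'a \<Rightarrow> real"
      proof (rule lebesgue_integral_countable_add)
        show "Q (S i) \<in> sets M" for i by (rule QM[OF SM])
        show "set_integrable M (\<Union>i. Q (S i)) f" unfolding set_integrable_def
          using integrable_mult_indicator[OF _ fi, of "\<Union>i. Q (S i)"] QM[OF SM] by auto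
      qed (rule disj)
      show ?case unfolding P_def QU ca[OF XYint] ca[OF EYint] using union(3) by (simp add: P_def)
    qed
  qed
  have "AE x in M. real_cond_exp M H (\<lambda>\<omega>. X \<omega> * Y \<omega>) x = E x * Y x"
  proof (rule H.real_cond_exp_charact)
    fix S assume "S \<in> sets H"
    then obtain T where T: "T \<in> sets (borel \<Otimes>\<^sub>M L)" "S = Q T"
      unfolding H_def Q_def using ZGm by (subst (asm) sets_vimage_algebra2) (auto dest: measurable_space)
    show "(\<integral>x\<in>S. X x * Y x \<partial>M) = (\<integral>x\<in>S. E x * Y x \<partial>M)" using all[OF T(1)] T(2) by (simp add: P_def)
  qed (use XYint EYint EH YH in auto)
  then show ?thesis by (simp add: H_def E_def K_def)
qed


definition L2 :: "'a measure \<Rightarrow> ('a \<Rightarrow> real) \<Rightarrow> bool" where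
  "L2 M f \<longleftrightarrow> f \<in> borel_measurable M \<and> integrable M (\<lambda>x. (f x)^2)"

lemma (in prob_space) L2_int: "L2 M f \<Longrightarrow> integrable M f"
  unfolding L2_def by (auto intro: square_integrable_imp_integrable)

lemma L2_mult:
  assumes "L2 M f" "L2 M g" shows "integrable M (\<lambda>x. f x * g x)"
proof (rule Bochner_Integration.integrable_bound[where f="\<lambda>x. (f x)^2 + (g x)^2"])
  show "integrable M (\<lambda>x. (f x)^2 + (g x)^2)" using assms by (auto simp: L2_def)
  show "(\<lambda>x. f x * g x) \<in> borel_measurable M" using assms by (auto simp: L2_def)
  have "\<bar>a * b\<bar> \<le> a^2 + b^2" for a b :: real
  proof -
    have 1: "2*\<bar>a\<bar>*\<bar>b\<bar> \<le> \<bar>a\<bar>^2 + \<bar>b\<bar>^2" by (rule sum_squares_bound)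
    have 2: "0 \<le> \<bar>a\<bar>*\<bar>b\<bar>" by simp
    have 3: "2*(\<bar>a\<bar>*\<bar>b\<bar>) \<le> a^2 + b^2" using 1 by (simp add: mult.assoc)
    have 4: "\<bar>a * b\<bar> = \<bar>a\<bar>*\<bar>b\<bar>" by (rule abs_mult)
    from 2 3 4 show ?thesis by linarith
  qed
  then show "AE x in M. norm (f x * g x) \<le> norm ((f x)^2 + (g x)^2)" by auto
qed

lemma L2_lin:
  assumes "L2 M f" "L2 M g" shows "L2 M (\<lambda>x. a * f x + b * g x)"
proof -
  have "(\<lambda>x. (a * f x + b * g x)^2) = (\<lambda>x. a^2 * (f x)^2 + (2*a*b * (f x * g x) + b^2 * (g x)^2))"
    by (auto simp: power2_eq_square algebra_simps)
  moreover have "integrable M \<dots>" using assms L2_mult[OF assms] by (auto simp: L2_def)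
  ultimately show ?thesis using assms by (auto simp: L2_def)
qed

lemma L2_diff: "L2 M f \<Longrightarrow> L2 M g \<Longrightarrow> L2 M (\<lambda>x. f x - g x)"
  using L2_lin[of M f g 1 "-1"] by simp

lemma L2_add: "L2 M f \<Longrightarrow> L2 M g \<Longrightarrow> L2 M (\<lambda>x. f x + g x)"
  using L2_lin[of M f g 1 1] by simp

lemma L2_sq_int: "L2 M f \<Longrightarrow> integrable M (\<lambda>x. (f x)^2)" by (simp add: L2_def)

lemma (in prob_space) L2_ce:
  assumes "sigma_finite_subalgebra M F" "L2 M f" shows "L2 M (real_cond_exp M F f)"
proof -
  interpret F: sigma_finite_subalgebra M F by fact
  have "integrable M (\<lambda>x. (real_cond_exp M F f x)^2)"
    apply (rule F.integrable_convex_cond_exp[where I=UNIV and q="\<lambda>x. x^2"])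
    using assms(2) L2_int[OF assms(2)] convex_power2 by (simp_all add: L2_def)
  then show ?thesis by (simp add: L2_def)
qed

lemma (in prob_space) tv_scalar:
  assumes subH: "subalgebra M H" and subHF: "subalgebra H F" and f: "L2 M f"
  shows "AE x in M. real_cond_exp M F (\<lambda>x. (f x - real_cond_exp M F f x)^2) x
     = real_cond_exp M F (real_cond_exp M H (\<lambda>x. (f x - real_cond_exp M H f x)^2)) x
       + real_cond_exp M F (\<lambda>x. (real_cond_exp M H f x - real_cond_exp M F (real_cond_exp M H f) x)^2) x"
proof -
  have subF: "subalgebra M F" using subH subHF by (auto simp: subalgebra_def)
  interpret F: sigma_finite_subalgebra M F by (rule sfs[OF subF])
  interpret H: sigma_finite_subalgebra M H by (rule sfs[OF subH])
  define w where "w = real_cond_exp M H f"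
  define c where "c = real_cond_exp M F f"
  define c' where "c' = real_cond_exp M F w"
  define a where "a = (\<lambda>x. f x - w x)"
  define b where "b = (\<lambda>x. w x - c x)"
  have Lw: "L2 M w" unfolding w_def by (rule L2_ce[OF sfs[OF subH] f])
  have Lc: "L2 M c" unfolding c_def by (rule L2_ce[OF sfs[OF subF] f])
  have La: "L2 M a" unfolding a_def by (rule L2_diff[OF f Lw])
  have Lb: "L2 M b" unfolding b_def by (rule L2_diff[OF Lw Lc])
  have fi: "integrable M f" by (rule L2_int[OF f])
  have wi: "integrable M w" by (rule L2_int[OF Lw])
  have ai: "integrable M a" by (rule L2_int[OF La])
  have a2i: "integrable M (\<lambda>x. (a x)^2)" using La by (simp add: L2_def)
  have b2i: "integrable M (\<lambda>x. (b x)^2)" using Lb by (simp add: L2_def)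
  have abi: "integrable M (\<lambda>x. b x * (2 * a x))"
  proof -
    have "(\<lambda>x. b x * (2 * a x)) = (\<lambda>x. 2 * (a x * b x))" by (auto simp: mult_ac)
    then show ?thesis using integrable_mult_right[OF L2_mult[OF La Lb], of 2] by simp
  qed
  have cH: "c \<in> borel_measurable H" unfolding c_def
    by (rule measurable_from_subalg[OF subHF]) simp
  have bH: "b \<in> borel_measurable H" unfolding b_def w_def using cH by measurable
  have bM: "b \<in> borel_measurable M" using Lb by (simp add: L2_def)
  have aM: "a \<in> borel_measurable M" using La by (simp add: L2_def)
  have cc: "AE x in M. c' x = c x"
    unfolding c'_def c_def w_def by (rule F.real_cond_exp_nested_subalg[OF subH subHF fi])
  have expand: "(\<lambda>x. (f x - c x)^2) = (\<lambda>x. (a x)^2 + (b x * (2 * a x) + (b x)^2))"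
    by (auto simp: a_def b_def power2_eq_square algebra_simps)
  have s1: "AE x in M. real_cond_exp M F (\<lambda>x. (f x - c x)^2) x
      = real_cond_exp M F (\<lambda>x. (a x)^2) x + (real_cond_exp M F (\<lambda>x. b x * (2 * a x)) x + real_cond_exp M F (\<lambda>x. (b x)^2) x)"
    using F.real_cond_exp_add[OF a2i Bochner_Integration.integrable_add[OF abi b2i]]
      F.real_cond_exp_add[OF abi b2i] unfolding expand by eventually_elim simp
  have s2: "AE x in M. real_cond_exp M F (\<lambda>x. (a x)^2) x = real_cond_exp M F (real_cond_exp M H (\<lambda>x. (a x)^2)) x"
    using F.real_cond_exp_nested_subalg[OF subH subHF a2i] by eventually_elim simp
  have h0: "AE x in M. real_cond_exp M H (\<lambda>x. b x * (2 * a x)) x = 0"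
  proof -
    have m: "AE x in M. real_cond_exp M H (\<lambda>x. b x * (2 * a x)) x = b x * real_cond_exp M H (\<lambda>x. 2 * a x) x"
      by (rule H.real_cond_exp_mult[OF bH _ abi]) (use aM in simp)
    have m2: "AE x in M. real_cond_exp M H (\<lambda>x. 2 * a x) x = 2 * real_cond_exp M H a x"
      by (rule H.real_cond_exp_cmult[OF ai])
    have m3: "AE x in M. real_cond_exp M H a x = real_cond_exp M H f x - real_cond_exp M H w x"
      unfolding a_def by (rule H.real_cond_exp_diff[OF fi wi])
    have m4: "AE x in M. real_cond_exp M H w x = w x"
      by (rule H.real_cond_exp_F_meas[OF wi]) (simp add: w_def)
    from m m2 m3 m4 show ?thesis by eventually_elim (simp add: w_def)
  qed
  have s3: "AE x in M. real_cond_exp M F (\<lambda>x. b x * (2 * a x)) x = 0"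
  proof -
    have n1: "AE x in M. real_cond_exp M F (real_cond_exp M H (\<lambda>x. b x * (2 * a x))) x = real_cond_exp M F (\<lambda>x. b x * (2 * a x)) x"
      by (rule F.real_cond_exp_nested_subalg[OF subH subHF abi])
    have n2: "AE x in M. real_cond_exp M F (real_cond_exp M H (\<lambda>x. b x * (2 * a x))) x = real_cond_exp M F (\<lambda>x. 0) x"
      by (rule F.real_cond_exp_cong[OF h0]) auto
    have n3: "AE x in M. real_cond_exp M F (\<lambda>x. 0::real) x = 0"
      by (rule F.real_cond_exp_F_meas) auto
    from n1 n2 n3 show ?thesis by eventually_elim simp
  qed
  have s4: "AE x in M. real_cond_exp M F (\<lambda>x. (b x)^2) x = real_cond_exp M F (\<lambda>x. (w x - c' x)^2) x"
    by (rule F.real_cond_exp_cong) (use cc bM in \<open>auto simp: b_def c'_def w_def elim!: eventually_mono\<close>)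
  from s1 s2 s3 s4 show ?thesis unfolding a_def c_def c'_def w_def by eventually_elim simp
qed


lemma nth_meas[measurable (raw)]:
  "f \<in> borel_measurable M \<Longrightarrow> (\<lambda>x. (f x :: real^'n) $ i) \<in> borel_measurable M"
  by (rule measurable_compose[OF _ borel_measurable_nth])

lemma comp_L2:
  fixes X :: "'a \<Rightarrow> real^'n"
  assumes Xm: "X \<in> borel_measurable M" and X2: "integrable M (\<lambda>x. (norm (X x))^2)"
  shows "L2 M (\<lambda>x. X x $ i)"
proof -
  have "integrable M (\<lambda>x. (X x $ i)^2)"
  proof (rule Bochner_Integration.integrable_bound[OF X2])
    show "(\<lambda>x. (X x $ i)^2) \<in> borel_measurable M" using Xm by measurable
    have "(x $ i)^2 \<le> (norm x)^2" for x :: "real^'n"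
      using power_mono[OF component_le_norm_cart[of x i], of 2] by simp
    then show "AE x in M. norm ((X x $ i)^2) \<le> norm ((norm (X x))^2)" by simp
  qed
  then show ?thesis using Xm by (simp add: L2_def)
qed

lemma (in prob_space) cv_sum:
  fixes X :: "'a \<Rightarrow> real^'n"
  assumes F: "sigma_finite_subalgebra M F"
    and Xm: "X \<in> borel_measurable M" and X2: "integrable M (\<lambda>x. (norm (X x))^2)"
  shows "AE x in M. cond_var M F X x =
     (\<Sum>i\<in>UNIV. real_cond_exp M F (\<lambda>x. (X x $ i - real_cond_exp M F (\<lambda>y. X y $ i) x)^2) x)"
proof -
  interpret F: sigma_finite_subalgebra M F by fact
  have eq: "(\<lambda>\<omega>. (norm (X \<omega> - cond_exp_vec M F X \<omega>))^2) =
      (\<lambda>\<omega>. \<Sum>i\<in>UNIV. (X \<omega> $ i - real_cond_exp M F (\<lambda>y. X y $ i) \<omega>)^2)"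
    by (simp add: normsq_vec cond_exp_vec_def)
  have "AE x in M. real_cond_exp M F (\<lambda>\<omega>. \<Sum>i\<in>UNIV. (X \<omega> $ i - real_cond_exp M F (\<lambda>y. X y $ i) \<omega>)^2) x =
     (\<Sum>i\<in>UNIV. real_cond_exp M F (\<lambda>x. (X x $ i - real_cond_exp M F (\<lambda>y. X y $ i) x)^2) x)"
    by (rule F.real_cond_exp_sum)
       (rule L2_sq_int[OF L2_diff[OF comp_L2[OF Xm X2] L2_ce[OF F comp_L2[OF Xm X2]]]])
  then show ?thesis by (simp add: cond_var_def eq)
qed

lemma (in prob_space) total_var:
  fixes X :: "'a \<Rightarrow> real^'n"
  assumes subH: "subalgebra M H" and subHF: "subalgebra H F"
    and Xm: "X \<in> borel_measurable M" and X2: "integrable M (\<lambda>x. (norm (X x))^2)"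
  shows "AE x in M. cond_var M F X x
     = real_cond_exp M F (cond_var M H X) x + cond_var M F (cond_exp_vec M H X) x"
proof -
  have subF: "subalgebra M F" using subH subHF by (auto simp: subalgebra_def)
  have sF: "sigma_finite_subalgebra M F" by (rule sfs[OF subF])
  have sH: "sigma_finite_subalgebra M H" by (rule sfs[OF subH])
  interpret F: sigma_finite_subalgebra M F by (rule sF)
  interpret H: sigma_finite_subalgebra M H by (rule sH)
  define W where "W = cond_exp_vec M H X"
  have LX: "L2 M (\<lambda>y. X y $ i)" for i by (rule comp_L2[OF Xm X2])
  have Lw: "L2 M (real_cond_exp M H (\<lambda>y. X y $ i))" for i by (rule L2_ce[OF sH LX])
  have Wi: "(\<lambda>y. W y $ i) = real_cond_exp M H (\<lambda>y. X y $ i)" for i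
    by (simp add: W_def cond_exp_vec_def)
  have Wm: "W \<in> borel_measurable M"
    by (rule vec_meas) (simp add: Wi)
  have W2: "integrable M (\<lambda>x. (norm (W x))^2)"
    unfolding normsq_vec using Lw by (auto simp: Wi[symmetric] L2_def)
  have t1: "AE x in M. cond_var M F X x =
     (\<Sum>i\<in>UNIV. real_cond_exp M F (\<lambda>x. (X x $ i - real_cond_exp M F (\<lambda>y. X y $ i) x)^2) x)"
    by (rule cv_sum[OF sF Xm X2])
  have t2: "AE x in M. \<forall>i\<in>UNIV. real_cond_exp M F (\<lambda>x. (X x $ i - real_cond_exp M F (\<lambda>y. X y $ i) x)^2) x
     = real_cond_exp M F (real_cond_exp M H (\<lambda>x. (X x $ i - real_cond_exp M H (\<lambda>y. X y $ i) x)^2)) x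
       + real_cond_exp M F (\<lambda>x. (real_cond_exp M H (\<lambda>y. X y $ i) x - real_cond_exp M F (real_cond_exp M H (\<lambda>y. X y $ i)) x)^2) x"
    by (rule AE_finite_allI) (simp_all add: tv_scalar[OF subH subHF LX])
  have t3: "AE x in M. cond_var M H X x =
     (\<Sum>i\<in>UNIV. real_cond_exp M H (\<lambda>x. (X x $ i - real_cond_exp M H (\<lambda>y. X y $ i) x)^2) x)"
    by (rule cv_sum[OF sH Xm X2])
  have t4: "AE x in M. real_cond_exp M F (cond_var M H X) x = real_cond_exp M F
      (\<lambda>x. \<Sum>i\<in>UNIV. real_cond_exp M H (\<lambda>x. (X x $ i - real_cond_exp M H (\<lambda>y. X y $ i) x)^2) x) x"
    by (rule F.real_cond_exp_cong[OF t3]) (auto simp: cond_var_def)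
  have t5: "AE x in M. real_cond_exp M F
      (\<lambda>x. \<Sum>i\<in>UNIV. real_cond_exp M H (\<lambda>x. (X x $ i - real_cond_exp M H (\<lambda>y. X y $ i) x)^2) x) x
     = (\<Sum>i\<in>UNIV. real_cond_exp M F (real_cond_exp M H (\<lambda>x. (X x $ i - real_cond_exp M H (\<lambda>y. X y $ i) x)^2)) x)"
    by (rule F.real_cond_exp_sum)
       (rule H.real_cond_exp_int(1)[OF L2_sq_int[OF L2_diff[OF LX Lw]]])
  have t6: "AE x in M. cond_var M F W x =
     (\<Sum>i\<in>UNIV. real_cond_exp M F (\<lambda>x. (W x $ i - real_cond_exp M F (\<lambda>y. W y $ i) x)^2) x)"
    by (rule cv_sum[OF sF Wm W2])
  from t1 t2 t4 t5 t6 show ?thesis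
    unfolding W_def[symmetric] Wi
    by eventually_elim (simp add: sum.distrib W_def cond_exp_vec_def)
qed


lemma lin_facts:
  fixes f :: "real^'n \<Rightarrow> real^'n"
  assumes "linear f"
  shows "f (x + y) = f x + f y" "f (x - y) = f x - f y" "f (c *\<^sub>R x) = c *\<^sub>R f x"
  using assms by (simp_all add: linear_add linear_diff linear_scale)

lemma rho_exp:
  fixes f :: "real^'n \<Rightarrow> real^'n"
  assumes "linear f"
  shows "f z = (\<Sum>i\<in>UNIV. (z $ i) *\<^sub>R f (axis i 1))"
proof -
  have "f z = f (\<Sum>i\<in>UNIV. (z $ i) *\<^sub>R axis i 1)"
    by (simp add: scalar_mult_eq_scaleR[symmetric] basis_expansion)
  also have "\<dots> = (\<Sum>i\<in>UNIV. (z $ i) *\<^sub>R f (axis i 1))"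
    using assms by (simp add: linear_sum linear_scale)
  finally show ?thesis .
qed

lemma (in prob_space) indep_set_sym: "indep_set A B \<Longrightarrow> indep_set B A"
  unfolding indep_sets2_eq by (metis Int_commute mult.commute)

lemma (in prob_space) cv_int:
  fixes X :: "'a \<Rightarrow> real^'n"
  assumes F: "sigma_finite_subalgebra M F"
    and Xm: "X \<in> borel_measurable M" and X2: "integrable M (\<lambda>x. (norm (X x))^2)"
  shows "integrable M (cond_var M F X)"
proof -
  interpret F: sigma_finite_subalgebra M F by fact
  have eq: "(\<lambda>\<omega>. (norm (X \<omega> - cond_exp_vec M F X \<omega>))^2) =
      (\<lambda>\<omega>. \<Sum>i\<in>UNIV. (X \<omega> $ i - real_cond_exp M F (\<lambda>y. X y $ i) \<omega>)^2)"
    by (simp add: normsq_vec cond_exp_vec_def)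
  have "integrable M (\<lambda>\<omega>. \<Sum>i\<in>UNIV. (X \<omega> $ i - real_cond_exp M F (\<lambda>y. X y $ i) \<omega>)^2)"
    by (intro Bochner_Integration.integrable_sum)
       (rule L2_sq_int[OF L2_diff[OF comp_L2[OF Xm X2] L2_ce[OF F comp_L2[OF Xm X2]]]])
  then show ?thesis unfolding cond_var_def eq by (rule F.real_cond_exp_int(1))
qed

lemma (in prob_space) cev_L2:
  fixes X :: "'a \<Rightarrow> real^'n"
  assumes H: "sigma_finite_subalgebra M H"
    and Xm: "X \<in> borel_measurable M" and X2: "integrable M (\<lambda>x. (norm (X x))^2)"
  shows "cond_exp_vec M H X \<in> borel_measurable M" "integrable M (\<lambda>x. (norm (cond_exp_vec M H X x))^2)"
proof -
  have LX: "L2 M (\<lambda>y. X y $ i)" for i by (rule comp_L2[OF Xm X2])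
  have Lw: "L2 M (real_cond_exp M H (\<lambda>y. X y $ i))" for i by (rule L2_ce[OF H LX])
  have Wi: "(\<lambda>y. cond_exp_vec M H X y $ i) = real_cond_exp M H (\<lambda>y. X y $ i)" for i
    by (simp add: cond_exp_vec_def)
  show "cond_exp_vec M H X \<in> borel_measurable M"
    by (rule vec_meas) (simp add: Wi)
  show "integrable M (\<lambda>x. (norm (cond_exp_vec M H X x))^2)"
    unfolding normsq_vec using Lw by (auto simp: Wi[symmetric] L2_def)
qed

lemma L2_vec_diff:
  fixes X Y :: "'a \<Rightarrow> real^'n"
  assumes "\<And>i. L2 M (\<lambda>x. X x $ i)" "\<And>i. L2 M (\<lambda>x. Y x $ i)"
  shows "integrable M (\<lambda>x. (norm (X x - Y x))^2)"
  unfolding normsq_vec using L2_diff[OF assms] by (auto simp: L2_def)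


lemma nsq_meas:
  fixes f g :: "'a \<Rightarrow> real^'n"
  assumes "f \<in> borel_measurable M" "g \<in> borel_measurable M"
  shows "(\<lambda>x. (norm (f x - g x))^2) \<in> borel_measurable M"
proof -
  have "(\<lambda>p::(real^'n) \<times> (real^'n). (norm (fst p - snd p))^2) \<in> borel_measurable borel"
    by (intro borel_measurable_continuous_onI continuous_intros)
  from measurable_compose[OF borel_measurable_Pair[OF assms] this] show ?thesis by simp
qed

lemma id_meas_sub: "subalgebra M A \<Longrightarrow> (\<lambda>x. x) \<in> measurable M A"
  by (rule measurableI) (auto simp: subalgebra_def dest: sets.sets_into_space)

lemma (in prob_space) indep_from_sets:
  assumes ind: "indep_set {G -` S \<inter> space M | S. S \<in> sets L} {Zp -` S \<inter> space M | S. S \<in> sets N}"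
    and Gm: "G \<in> measurable M L" and Zm: "Zp \<in> measurable M N"
  shows "indep_var (vimage_algebra (space M) Zp N) id (vimage_algebra (space M) G L) id"
proof -
  define A where "A = vimage_algebra (space M) Zp N"
  define B where "B = vimage_algebra (space M) G L"
  have sA: "subalgebra M A" unfolding A_def by (rule vimage_sub[OF Zm])
  have sB: "subalgebra M B" unfolding B_def by (rule vimage_sub[OF Gm])
  have e: "sigma_sets (space M) {id -` S \<inter> space M | S. S \<in> sets C} = sets C" if "subalgebra M C" for C
  proof -
    have "{id -` S \<inter> space M | S. S \<in> sets C} = sets C"
      using that sets.sets_into_space[of _ C] by (auto simp: subalgebra_def)
    then show ?thesis using that sets.sigma_sets_eq[of C] by (simp add: subalgebra_def)
  qed
  have sAe: "sets A = {Zp -` S \<inter> space M | S. S \<in> sets N}"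
    unfolding A_def by (rule sets_vimage_algebra2) (use Zm in \<open>auto dest: measurable_space\<close>)
  have sBe: "sets B = {G -` S \<inter> space M | S. S \<in> sets L}"
    unfolding B_def by (rule sets_vimage_algebra2) (use Gm in \<open>auto dest: measurable_space\<close>)
  have "indep_var A id B id"
    unfolding indep_var_eq e[OF sA] e[OF sB]
    using id_meas_sub[OF sA] id_meas_sub[OF sB] indep_set_sym[OF ind] sAe sBe
    by (simp add: id_def)
  then show ?thesis by (simp add: A_def B_def)
qed

theorem theorem3p5:
  fixes M :: "'a measure"
    and Gr :: "'g::t2_space monoid"
    and lam :: "'g measure"
    and \<rho> :: "'g \<Rightarrow> real^'d \<Rightarrow> real^'d"
    and G :: "'a \<Rightarrow> 'g"
    and Zt0 Zt1 Z0 Z1 Zt Ztt D U :: "'a \<Rightarrow> real^'d"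
    and t :: real
  assumes "prob_space M"
    \<comment> \<open>compact (Hausdorff) topological group\<close>
    and "group Gr" and "carrier Gr = UNIV"
    and "compact (UNIV :: 'g set)"
    and "continuous_on UNIV (\<lambda>p::'g \<times> 'g. fst p \<otimes>\<^bsub>Gr\<^esub> snd p)"
    and "continuous_on UNIV (\<lambda>g. inv\<^bsub>Gr\<^esub> g)"
    \<comment> \<open>linear orthogonal (continuous) action on R^d\<close>
    and "\<And>g. linear (\<rho> g)"
    and "\<And>g x. norm (\<rho> g x) = norm x"
    and "\<And>g h. \<rho> (g \<otimes>\<^bsub>Gr\<^esub> h) = \<rho> g \<circ> \<rho> h"
    and "\<rho> \<one>\<^bsub>Gr\<^esub> = id"
    and "continuous_on UNIV (\<lambda>p::'g \<times> (real^'d). \<rho> (fst p) (snd p))"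
    \<comment> \<open>normalized Haar measure\<close>
    and "prob_space lam" and "sets lam = sets borel"
    and "\<And>g. distr lam lam (\<lambda>h. g \<otimes>\<^bsub>Gr\<^esub> h) = lam"
    \<comment> \<open>random vectors with finite second moments\<close>
    and "Zt0 \<in> borel_measurable M" and "Zt1 \<in> borel_measurable M"
    and "integrable M (\<lambda>\<omega>. (norm (Zt0 \<omega>))^2)"
    and "integrable M (\<lambda>\<omega>. (norm (Zt1 \<omega>))^2)"
    \<comment> \<open>G ~ lam, independent of the pair\<close>
    and "G \<in> measurable M lam" and "distr M lam G = lam"
    and "prob_space.indep_set M
           {G -` A \<inter> space M | A. A \<in> sets lam}
           {(\<lambda>\<omega>. (Zt0 \<omega>, Zt1 \<omega>)) -` B \<inter> space M | B. B \<in> sets (borel :: ((real^'d) \<times> (real^'d)) measure)}"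
    and "t \<in> {0..1}"
    and "Z0 = (\<lambda>\<omega>. \<rho> (G \<omega>) (Zt0 \<omega>))"
    and "Z1 = (\<lambda>\<omega>. \<rho> (G \<omega>) (Zt1 \<omega>))"
    and "Zt = (\<lambda>\<omega>. (1 - t) *\<^sub>R Z0 \<omega> + t *\<^sub>R Z1 \<omega>)"
    and "Ztt = (\<lambda>\<omega>. (1 - t) *\<^sub>R Zt0 \<omega> + t *\<^sub>R Zt1 \<omega>)"
    and "D = (\<lambda>\<omega>. Zt1 \<omega> - Zt0 \<omega>)"
    and "U = (\<lambda>\<omega>. Z1 \<omega> - Z0 \<omega>)"
  shows "(AE \<omega> in M.
            cond_var M (sigma_of M borel Zt) U \<omega>
          = real_cond_exp M (sigma_of M borel Zt) (cond_var M (sigma_of M borel Ztt) D) \<omega>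
            + cond_var M (sigma_of M borel Zt)
                (cond_exp_vec M (sigma_of M (borel \<Otimes>\<^sub>M lam) (\<lambda>\<omega>. (Zt \<omega>, G \<omega>))) U) \<omega>)
       \<and> (AE \<omega> in M. cond_var M (sigma_of M borel Zt)
                (cond_exp_vec M (sigma_of M (borel \<Otimes>\<^sub>M lam) (\<lambda>\<omega>. (Zt \<omega>, G \<omega>))) U) \<omega> \<ge> 0)
       \<and> prob_space.expectation M (cond_var M (sigma_of M borel Zt) U)
           \<ge> prob_space.expectation M (cond_var M (sigma_of M borel Ztt) D)"
proof -
  interpret prob_space M by (rule assms(1))
  have lin: "linear (\<rho> g)" for g by (rule assms(7))
  have cont: "continuous_on UNIV (\<lambda>g. \<rho> (h g) v)" if "continuous_on UNIV h" for h and v :: "real^'d"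
    using continuous_on_compose2[OF assms(11) continuous_on_Pair[OF that continuous_on_const]] by simp
  have aM: "(\<lambda>g. \<rho> (h g) v) \<in> borel_measurable lam" if "continuous_on UNIV h" for h and v :: "real^'d"
    by (subst measurable_cong_sets[OF assms(13) refl]) (rule borel_measurable_continuous_onI[OF cont[OF that]])
  have PhiM: "(\<lambda>p. \<rho> (h (snd p)) (fst p)) \<in> borel_measurable (borel \<Otimes>\<^sub>M lam)"
    if "continuous_on UNIV h" for h
  proof -
    have eq: "(\<lambda>p. \<rho> (h (snd p)) (fst p)) = (\<lambda>p. \<Sum>i\<in>UNIV. (fst p $ i) *\<^sub>R \<rho> (h (snd p)) (axis i 1))"
      by (rule ext, rule rho_exp[OF lin])
    have m1: "(\<lambda>p. \<rho> (h (snd p)) (axis i 1)) \<in> borel_measurable (borel \<Otimes>\<^sub>M lam)" for i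
      using measurable_compose[OF measurable_snd aM[OF that]] .
    have m2: "(\<lambda>p::(real^'d) \<times> 'g. fst p $ i) \<in> borel_measurable (borel \<Otimes>\<^sub>M lam)" for i :: 'd
      by measurable
    show ?thesis unfolding eq
      by (intro borel_measurable_sum borel_measurable_scaleR m1 m2)
  qed
  have PhiM1: "(\<lambda>p. \<rho> (snd p) (fst p)) \<in> borel_measurable (borel \<Otimes>\<^sub>M lam)"
    using PhiM[OF continuous_on_id] by simp
  have PhiM2: "(\<lambda>p. \<rho> (inv\<^bsub>Gr\<^esub> (snd p)) (fst p)) \<in> borel_measurable (borel \<Otimes>\<^sub>M lam)"
    using PhiM[OF assms(6)] by simp
  have Gm: "G \<in> measurable M lam" by (rule assms(19))
  have Gsp: "G \<in> space M \<rightarrow> space lam" using Gm by (auto dest: measurable_space)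
  define Zp where "Zp = (\<lambda>\<omega>. (Zt0 \<omega>, Zt1 \<omega>))"
  have ZpM: "Zp \<in> borel_measurable M" unfolding Zp_def using assms(15,16) by (rule borel_measurable_Pair)
  define A where "A = vimage_algebra (space M) Zp borel"
  have subA: "subalgebra M A" unfolding A_def by (rule vimage_sub[OF ZpM])
  have ZpA: "Zp \<in> borel_measurable A" unfolding A_def by (rule measurable_vimage_algebra1) auto
  have phiA: "(\<lambda>\<omega>. \<phi> (Zp \<omega>)) \<in> borel_measurable A" if "continuous_on UNIV \<phi>" for \<phi> :: "_ \<Rightarrow> real^'d"
    by (rule measurable_compose[OF ZpA borel_measurable_continuous_onI[OF that]])
  have ZttA: "Ztt \<in> borel_measurable A"
  proof -
    have "Ztt = (\<lambda>\<omega>. (\<lambda>p. (1 - t) *\<^sub>R fst p + t *\<^sub>R snd p) (Zp \<omega>))" by (simp add: assms(26) Zp_def)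
    also have "\<dots> \<in> borel_measurable A" by (rule phiA) (intro continuous_intros)
    finally show ?thesis .
  qed
  have DA: "D \<in> borel_measurable A"
  proof -
    have "D = (\<lambda>\<omega>. (\<lambda>p. snd p - fst p) (Zp \<omega>))" by (simp add: assms(27) Zp_def)
    also have "\<dots> \<in> borel_measurable A" by (rule phiA) (intro continuous_intros)
    finally show ?thesis .
  qed
  have ZttM: "Ztt \<in> borel_measurable M" by (rule measurable_from_subalg[OF subA ZttA])
  have DM: "D \<in> borel_measurable M" by (rule measurable_from_subalg[OF subA DA])
  have Zt_eq: "Zt \<omega> = \<rho> (G \<omega>) (Ztt \<omega>)" for \<omega>
    by (simp add: assms(23-26) lin_facts[OF lin])
  have U_eq: "U \<omega> = \<rho> (G \<omega>) (D \<omega>)" for \<omega>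
    by (simp add: assms(23,24,27,28) lin_facts[OF lin])
  have rinv: "\<rho> (inv\<^bsub>Gr\<^esub> g) (\<rho> g z) = z" for g z
  proof -
    have "inv\<^bsub>Gr\<^esub> g \<otimes>\<^bsub>Gr\<^esub> g = \<one>\<^bsub>Gr\<^esub>" using group.l_inv[OF assms(2)] assms(3) by auto
    then have "\<rho> (inv\<^bsub>Gr\<^esub> g \<otimes>\<^bsub>Gr\<^esub> g) z = z" by (simp add: assms(10))
    then show ?thesis using assms(9) by simp
  qed
  have Ztt_eq: "Ztt \<omega> = \<rho> (inv\<^bsub>Gr\<^esub> (G \<omega>)) (Zt \<omega>)" for \<omega>
    by (simp add: Zt_eq rinv)
  have ZtM: "Zt \<in> borel_measurable M"
  proof -
    have "Zt = (\<lambda>\<omega>. (\<lambda>p. \<rho> (snd p) (fst p)) (Ztt \<omega>, G \<omega>))" using Zt_eq by auto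
    also have "\<dots> \<in> borel_measurable M"
      by (rule measurable_compose[OF measurable_Pair[OF ZttM Gm] PhiM1])
    finally show ?thesis .
  qed
  have UM: "U \<in> borel_measurable M"
  proof -
    have "U = (\<lambda>\<omega>. (\<lambda>p. \<rho> (snd p) (fst p)) (D \<omega>, G \<omega>))" using U_eq by auto
    also have "\<dots> \<in> borel_measurable M"
      by (rule measurable_compose[OF measurable_Pair[OF DM Gm] PhiM1])
    finally show ?thesis .
  qed
  define H where "H = sigma_of M (borel \<Otimes>\<^sub>M lam) (\<lambda>\<omega>. (Zt \<omega>, G \<omega>))"
  define H' where "H' = vimage_algebra (space M) (\<lambda>\<omega>. (Ztt \<omega>, G \<omega>)) (borel \<Otimes>\<^sub>M lam)"
  define F where "F = sigma_of M borel Zt"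
  define K where "K = sigma_of M borel Ztt"
  have HH': "H = H'"
    unfolding H_def H'_def sigma_of_def
  proof (rule vimage_eq, rule equalityI)
    show "sets (vimage_algebra (space M) (\<lambda>\<omega>. (Zt \<omega>, G \<omega>)) (borel \<Otimes>\<^sub>M lam))
        \<subseteq> sets (vimage_algebra (space M) (\<lambda>\<omega>. (Ztt \<omega>, G \<omega>)) (borel \<Otimes>\<^sub>M lam))"
      by (rule vimage_sets_sub[where \<phi>="\<lambda>p. (\<rho> (snd p) (fst p), snd p)"])
         (use Gsp Zt_eq measurable_Pair[OF PhiM1 measurable_snd] in \<open>auto simp: space_pair_measure\<close>)
    show "sets (vimage_algebra (space M) (\<lambda>\<omega>. (Ztt \<omega>, G \<omega>)) (borel \<Otimes>\<^sub>M lam))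
        \<subseteq> sets (vimage_algebra (space M) (\<lambda>\<omega>. (Zt \<omega>, G \<omega>)) (borel \<Otimes>\<^sub>M lam))"
      by (rule vimage_sets_sub[where \<phi>="\<lambda>p. (\<rho> (inv\<^bsub>Gr\<^esub> (snd p)) (fst p), snd p)"])
         (use Gsp Ztt_eq measurable_Pair[OF PhiM2 measurable_snd] in \<open>auto simp: space_pair_measure\<close>)
  qed
  have ZtGM: "(\<lambda>\<omega>. (Zt \<omega>, G \<omega>)) \<in> measurable M (borel \<Otimes>\<^sub>M lam)" by (rule measurable_Pair[OF ZtM Gm])
  have subH: "subalgebra M H" unfolding H_def sigma_of_def by (rule vimage_sub[OF ZtGM])
  have pairH: "(\<lambda>\<omega>. (Zt \<omega>, G \<omega>)) \<in> measurable H (borel \<Otimes>\<^sub>M lam)"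
    unfolding H_def sigma_of_def by (rule measurable_vimage_algebra1) (use ZtGM in \<open>auto dest: measurable_space\<close>)
  have ZtH: "Zt \<in> borel_measurable H" using measurable_compose[OF pairH measurable_fst] by simp
  have subHF: "subalgebra H F" using vimage_sub[OF ZtH] by (simp add: F_def H_def sigma_of_def)
  have subF: "subalgebra M F" using subH subHF by (auto simp: subalgebra_def)
  have subK: "subalgebra M K" unfolding K_def sigma_of_def by (rule vimage_sub[OF ZttM])
  have spA: "space A = space M" by (simp add: A_def)
  have subAK: "subalgebra A K" using vimage_sub[OF ZttA] by (simp add: K_def sigma_of_def spA)
  have sH: "sigma_finite_subalgebra M H" by (rule sfs[OF subH])
  have sF: "sigma_finite_subalgebra M F" by (rule sfs[OF subF])
  have sK: "sigma_finite_subalgebra M K" by (rule sfs[OF subK])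
  interpret Hs: sigma_finite_subalgebra M H by (rule sH)
  interpret Fs: sigma_finite_subalgebra M F by (rule sF)
  interpret Ks: sigma_finite_subalgebra M K by (rule sK)
  have D2: "integrable M (\<lambda>x. (norm (D x))^2)"
    unfolding assms(27) by (rule L2_vec_diff[OF comp_L2[OF assms(16,18)] comp_L2[OF assms(15,17)]])
  have U2: "integrable M (\<lambda>x. (norm (U x))^2)"
    using D2 by (simp add: U_eq assms(8))
  have partA: "AE x in M. cond_var M F U x
     = real_cond_exp M F (cond_var M H U) x + cond_var M F (cond_exp_vec M H U) x"
    by (rule total_var[OF subH subHF UM U2])
  define m where "m = cond_exp_vec M K D"
  have indep: "indep_var A id (vimage_algebra (space M) G lam) id"
    unfolding A_def by (rule indep_from_sets[OF _ Gm ZpM]) (use assms(21) in \<open>simp add: Zp_def\<close>)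
  define aa where "aa i j g = \<rho> g (axis i 1) $ j" for i j g
  have aB: "(\<lambda>\<omega>. aa i j (G \<omega>)) \<in> borel_measurable (vimage_algebra (space M) G lam)" for i j
    unfolding aa_def
    by (rule measurable_compose[OF measurable_vimage_algebra1[OF Gsp] nth_meas[OF aM[OF continuous_on_id, simplified]]])
  have ab: "\<bar>aa i j g\<bar> \<le> 1" for i j g
    using component_le_norm_cart[of "\<rho> g (axis i 1)" j] by (simp add: aa_def assms(8))
  have DiA: "(\<lambda>\<omega>. D \<omega> $ i) \<in> borel_measurable A" for i by (rule nth_meas[OF DA])
  have LD: "L2 M (\<lambda>\<omega>. D \<omega> $ i)" for i by (rule comp_L2[OF DM D2])
  have Di_int: "integrable M (\<lambda>\<omega>. D \<omega> $ i)" for i by (rule L2_int[OF LD])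
  have core_ij: "AE \<omega> in M. real_cond_exp M H' (\<lambda>\<omega>. D \<omega> $ i * aa i j (G \<omega>)) \<omega>
      = real_cond_exp M K (\<lambda>\<omega>. D \<omega> $ i) \<omega> * aa i j (G \<omega>)" for i j
    using core[OF subA Gm indep ZttA DiA Di_int aB ab] by (simp add: H'_def K_def sigma_of_def)
  have U_comp: "U \<omega> $ j = (\<Sum>i\<in>UNIV. D \<omega> $ i * aa i j (G \<omega>))" for \<omega> j
    by (subst U_eq, subst rho_exp[OF lin]) (simp add: aa_def)
  have m_comp: "\<rho> (G \<omega>) (m \<omega>) $ j = (\<Sum>i\<in>UNIV. real_cond_exp M K (\<lambda>\<omega>. D \<omega> $ i) \<omega> * aa i j (G \<omega>))" for \<omega> j
    by (subst rho_exp[OF lin]) (simp add: aa_def m_def cond_exp_vec_def)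
  have prod_int: "integrable M (\<lambda>\<omega>. D \<omega> $ i * aa i j (G \<omega>))" for i j
  proof (rule Bochner_Integration.integrable_bound[OF Di_int])
    show "(\<lambda>\<omega>. D \<omega> $ i * aa i j (G \<omega>)) \<in> borel_measurable M"
      using measurable_from_subalg[OF vimage_sub[OF Gm] aB] DM by measurable
    show "AE x in M. norm (D x $ i * aa i j (G x)) \<le> norm (D x $ i)"
      by (intro AE_I2) (simp add: abs_mult mult_left_le ab)
  qed
  have EHU: "AE \<omega> in M. \<forall>j\<in>UNIV. real_cond_exp M H (\<lambda>\<eta>. U \<eta> $ j) \<omega> = \<rho> (G \<omega>) (m \<omega>) $ j"
  proof (rule AE_finite_allI, simp)
    fix j
    have e1: "(\<lambda>\<eta>. U \<eta> $ j) = (\<lambda>\<eta>. \<Sum>i\<in>UNIV. D \<eta> $ i * aa i j (G \<eta>))" using U_comp by auto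
    interpret H's: sigma_finite_subalgebra M H' using sH by (simp add: HH')
    have e2: "AE \<omega> in M. real_cond_exp M H' (\<lambda>\<eta>. \<Sum>i\<in>UNIV. D \<eta> $ i * aa i j (G \<eta>)) \<omega>
       = (\<Sum>i\<in>UNIV. real_cond_exp M H' (\<lambda>\<eta>. D \<eta> $ i * aa i j (G \<eta>)) \<omega>)"
      by (rule H's.real_cond_exp_sum[OF prod_int])
    have e3: "AE \<omega> in M. \<forall>i\<in>UNIV. real_cond_exp M H' (\<lambda>\<omega>. D \<omega> $ i * aa i j (G \<omega>)) \<omega>
      = real_cond_exp M K (\<lambda>\<omega>. D \<omega> $ i) \<omega> * aa i j (G \<omega>)"
      by (rule AE_finite_allI) (simp_all add: core_ij)
    from e2 e3 show "AE \<omega> in M. real_cond_exp M H (\<lambda>\<eta>. U \<eta> $ j) \<omega> = \<rho> (G \<omega>) (m \<omega>) $ j"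
      unfolding e1 HH' m_comp by eventually_elim simp
  qed
  have WU: "AE \<omega> in M. cond_exp_vec M H U \<omega> = \<rho> (G \<omega>) (m \<omega>)"
    using EHU by eventually_elim (simp add: vec_eq_iff cond_exp_vec_def)
  have mi: "(\<lambda>x. m x $ i) = real_cond_exp M K (\<lambda>\<eta>. D \<eta> $ i)" for i
    by (simp add: m_def cond_exp_vec_def)
  have mA: "m \<in> borel_measurable A"
    by (rule vec_meas) (simp add: mi measurable_from_subalg[OF subAK])
  have mM: "m \<in> borel_measurable M" by (rule measurable_from_subalg[OF subA mA])
  have Lm: "L2 M (\<lambda>x. m x $ i)" for i unfolding mi by (rule L2_ce[OF sK LD])
  have Dm2: "integrable M (\<lambda>x. (norm (D x - m x))^2)" by (rule L2_vec_diff[OF LD Lm])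
  have WM: "cond_exp_vec M H U \<in> borel_measurable M" by (rule cev_L2(1)[OF sH UM U2])
  have W2: "integrable M (\<lambda>x. (norm (cond_exp_vec M H U x))^2)" by (rule cev_L2(2)[OF sH UM U2])
  have b1: "AE \<omega> in M. cond_var M H U \<omega> = real_cond_exp M H (\<lambda>\<omega>. (norm (D \<omega> - m \<omega>))^2) \<omega>"
    unfolding cond_var_def
  proof (rule Hs.real_cond_exp_cong)
    show "AE x in M. (norm (U x - cond_exp_vec M H U x))^2 = (norm (D x - m x))^2"
      using WU by eventually_elim (simp add: U_eq lin_facts(2)[OF lin, symmetric] assms(8))
  qed (rule nsq_meas[OF UM WM], rule nsq_meas[OF DM mM])
  have b2: "AE \<omega> in M. real_cond_exp M H' (\<lambda>\<omega>. (norm (D \<omega> - m \<omega>))^2 * 1) \<omega>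
      = real_cond_exp M K (\<lambda>\<omega>. (norm (D \<omega> - m \<omega>))^2) \<omega> * 1"
    using core[OF subA Gm indep ZttA _ Dm2, of "\<lambda>_. 1" 1] DA mA
    by (simp add: H'_def K_def sigma_of_def)
  have partB: "AE \<omega> in M. cond_var M H U \<omega> = cond_var M K D \<omega>"
    using b1 b2 unfolding HH' by eventually_elim (simp add: cond_var_def m_def)
  have c1: "AE \<omega> in M. real_cond_exp M F (cond_var M H U) \<omega> = real_cond_exp M F (cond_var M K D) \<omega>"
    by (rule Fs.real_cond_exp_cong[OF partB]) (simp_all add: cond_var_def)
  have conj1: "AE \<omega> in M. cond_var M F U \<omega>
     = real_cond_exp M F (cond_var M K D) \<omega> + cond_var M F (cond_exp_vec M H U) \<omega>"
    using partA c1 by eventually_elim simp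
  have conj2: "AE \<omega> in M. cond_var M F (cond_exp_vec M H U) \<omega> \<ge> 0"
    unfolding cond_var_def by (rule Fs.real_cond_exp_pos) (simp, rule nsq_meas[OF WM cev_L2(1)[OF sF WM W2]])
  have i1: "integrable M (real_cond_exp M F (cond_var M K D))"
    by (rule Fs.real_cond_exp_int(1)[OF cv_int[OF sK DM D2]])
  have i2: "integrable M (cond_var M F (cond_exp_vec M H U))" by (rule cv_int[OF sF WM W2])
  have "expectation (cond_var M F U)
      = expectation (\<lambda>\<omega>. real_cond_exp M F (cond_var M K D) \<omega> + cond_var M F (cond_exp_vec M H U) \<omega>)"
    by (rule integral_cong_AE[OF _ _ conj1]) (simp_all add: cond_var_def)
  also have "\<dots> = expectation (real_cond_exp M F (cond_var M K D)) + expectation (cond_var M F (cond_exp_vec M H U))"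
    by (rule Bochner_Integration.integral_add[OF i1 i2])
  also have "expectation (real_cond_exp M F (cond_var M K D)) = expectation (cond_var M K D)"
    by (rule Fs.real_cond_exp_int(2)[OF cv_int[OF sK DM D2]])
  finally have conj3: "expectation (cond_var M F U) \<ge> expectation (cond_var M K D)"
    using integral_nonneg_AE[OF conj2] by simp
  show ?thesis using conj1 conj2 conj3 unfolding F_def K_def H_def by simp
qed

end
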